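(* Consider the two-channel (Paris metro pricing) model described in the context, where $\phi$ is an increasing concave differentiable function with $\phi(x)\ge 0$ for all $x\ge0$. Then in the ISP's revenue maximization problem, the optimal consumer threshold is always $x_t=x_0$ (for any value of the CP cost parameter $a$, which does not enter the problem).
   Context: Model: fix $\gamma>2$, $\beta>2$, $\lambda>0$. Consumer types have density $x^{-\gamma}$ on $x\ge x_0:=(\frac{1}{\gamma-1})^{\frac{1}{\gamma-1}}$, CP types density $y^{-\beta}$ on $y\ge y_0:=(\frac{1}{\beta-1})^{\frac{1}{\beta-1}}$; $\bar X=\int_{x_0}^\infty x^{1-\gamma}dx$, $\bar Y=\int_{y_0}^\infty y^{1-\beta}dy$, $T_0=\bar X\bar Y$. The ISP splits capacity $1$ into a pay channel of capacity $B_1\in[0,1]$ and a free channel of capacity $1-B_1$. Consumers of type $\ge x_t$ participate; CPs of type $\ge y_t$ use the pay channel (paying $by$ for type $y$), CPs of type in $[y_0,y_t)$ use the free channel. Channel traffics are $T_1=\sqrt{B_1T_0\int_{x_t}^\infty x^{1-\gamma}dx\int_{y_t}^\infty y^{1-\beta}dy}$ and $T_2=\sqrt{(1-B_1)T_0\int_{x_t}^\infty x^{1-\gamma}dx\int_{y_0}^{y_t}y^{1-\beta}dy}$, with speeds $B_1T_0/T_1$ and $(1-B_1)T_0/T_2$. The membership fee and CP fee are set so threshold types are indifferent: $c=\phi\big((\int_{y_0}^{y_t}\frac{(1-B_1)T_0}{T_2}y^{1-\beta}dy+\int_{y_t}^\infty\frac{B_1T_0}{T_1}y^{1-\beta}dy)x_t\big)$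 and $\lambda y_t\int_{x_t}^\infty\frac{B_1T_0}{T_1}x^{1-\gamma}dx-by_t=\lambda y_t\int_{x_t}^\infty\frac{(1-B_1)T_0}{T_2}x^{1-\gamma}dx$. The ISP solves $\max_{x_t,y_t,B_1} R=c\int_{x_t}^\infty x^{-\gamma}dx+b\int_{y_t}^\infty y^{1-\beta}dy$ subject to $x_t\ge x_0$, $y_t\ge y_0$, $\frac{B_1T_0}{T_1}\ge\frac{(1-B_1)T_0}{T_2}$, $0\le B_1\le1$. *)

theory Defs
  imports "HOL-Analysis.Analysis"
begin

definition x0 :: "real \<Rightarrow> real" where
  "x0 gam = (1 / (gam - 1)) powr (1 / (gam - 1))"

definition y0 :: "real \<Rightarrow> real" where
  "y0 bet = (1 / (bet - 1)) powr (1 / (bet - 1))"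

definition Xbar :: "real \<Rightarrow> real" where
  "Xbar gam = (LBINT x:{x0 gam..}. x powr (1 - gam))"

definition Ybar :: "real \<Rightarrow> real" where
  "Ybar bet = (LBINT y:{y0 bet..}. y powr (1 - bet))"

definition T0 :: "real \<Rightarrow> real \<Rightarrow> real" where
  "T0 gam bet = Xbar gam * Ybar bet"

text \<open>Traffic of the pay channel (1) and of the free channel (2).\<close>
definition T1 :: "real \<Rightarrow> real \<Rightarrow> real \<Rightarrow> real \<Rightarrow> real \<Rightarrow> real" where
  "T1 gam bet xt yt B1 = sqrt (B1 * T0 gam bet * (LBINT x:{xt..}. x powr (1 - gam))
                              * (LBINT y:{yt..}. y powr (1 - bet)))"

definition T2 :: "real \<Rightarrow> real \<Rightarrow> real \<Rightarrow> real \<Rightarrow> real \<Rightarrow> real" where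
  "T2 gam bet xt yt B1 = sqrt ((1 - B1) * T0 gam bet * (LBINT x:{xt..}. x powr (1 - gam))
                              * (LBINT y:{y0 bet..<yt}. y powr (1 - bet)))"

definition speed1 :: "real \<Rightarrow> real \<Rightarrow> real \<Rightarrow> real \<Rightarrow> real \<Rightarrow> real" where
  "speed1 gam bet xt yt B1 = B1 * T0 gam bet / T1 gam bet xt yt B1"

definition speed2 :: "real \<Rightarrow> real \<Rightarrow> real \<Rightarrow> real \<Rightarrow> real \<Rightarrow> real" where
  "speed2 gam bet xt yt B1 = (1 - B1) * T0 gam bet / T2 gam bet xt yt B1"

text \<open>Membership fee c: threshold consumer is indifferent.\<close>
definition fee_c :: "(real \<Rightarrow> real) \<Rightarrow> real \<Rightarrow> real \<Rightarrow> real \<Rightarrow> real \<Rightarrow> real \<Rightarrow> real" where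
  "fee_c \<phi> gam bet xt yt B1 =
     \<phi> (((LBINT y:{y0 bet..<yt}. speed2 gam bet xt yt B1 * y powr (1 - bet))
         + (LBINT y:{yt..}. speed1 gam bet xt yt B1 * y powr (1 - bet))) * xt)"

text \<open>CP fee b: the unique solution of the threshold-CP indifference equation
  lam*yt*\<integral> s1 x^(1-gam) - b*yt = lam*yt*\<integral> s2 x^(1-gam) (note yt > 0).\<close>
definition fee_b :: "real \<Rightarrow> real \<Rightarrow> real \<Rightarrow> real \<Rightarrow> real \<Rightarrow> real \<Rightarrow> real" where
  "fee_b lam gam bet xt yt B1 =
     (lam * yt * (LBINT x:{xt..}. speed1 gam bet xt yt B1 * x powr (1 - gam))
      - lam * yt * (LBINT x:{xt..}. speed2 gam bet xt yt B1 * x powr (1 - gam))) / yt"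

definition revenue ::
  "(real \<Rightarrow> real) \<Rightarrow> real \<Rightarrow> real \<Rightarrow> real \<Rightarrow> real \<Rightarrow> real \<Rightarrow> real \<Rightarrow> real" where
  "revenue \<phi> lam gam bet xt yt B1 =
     fee_c \<phi> gam bet xt yt B1 * (LBINT x:{xt..}. x powr (- gam))
     + fee_b lam gam bet xt yt B1 * (LBINT y:{yt..}. y powr (1 - bet))"

definition feasible :: "real \<Rightarrow> real \<Rightarrow> real \<Rightarrow> real \<Rightarrow> real \<Rightarrow> bool" where
  "feasible gam bet xt yt B1 \<longleftrightarrow>
     xt \<ge> x0 gam \<and> yt \<ge> y0 bet \<and>
     speed1 gam bet xt yt B1 \<ge> speed2 gam bet xt yt B1 \<and> 0 \<le> B1 \<and> B1 \<le> 1"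

end

theory Submission imports Defs begin

lemma concave_ratio:
  fixes \<phi> :: "real \<Rightarrow> real"
  assumes "concave_on {0..} \<phi>" "\<forall>x\<ge>0. \<phi> x \<ge> 0" "0 < v" "v \<le> u"
  shows "\<phi> u * v \<le> \<phi> v * u"
proof -
  define t where "t = v / u"
  have u: "u > 0" using assms by linarith
  have t: "0 \<le> t" "t \<le> 1" using assms u by (auto simp: t_def field_simps)
  have "\<phi> ((1 - t) *\<^sub>R 0 + t *\<^sub>R u) \<ge> (1 - t) * \<phi> 0 + t * \<phi> u"
    using concave_onD[OF assms(1) t, of 0 u] u by auto
  moreover have "(1 - t) *\<^sub>R 0 + t *\<^sub>R u = v" using u by (simp add: t_def)
  moreover have "(1 - t) * \<phi> 0 \<ge> 0" using t assms(2) by simp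
  ultimately have "t * \<phi> u \<le> \<phi> v" by (smt (verit))
  then have "v * \<phi> u \<le> u * \<phi> v" using u by (simp add: t_def field_simps)
  then show ?thesis by (simp add: mult.commute)
qed

lemma cterm:
  fixes \<phi> :: "real \<Rightarrow> real"
  assumes "concave_on {0..} \<phi>" "\<forall>x\<ge>0. \<phi> x \<ge> 0" "M \<ge> 0" "0 < g0" "g0 \<le> g1"
    "0 < C1" "C1 < C0" "g1 * C1 < g0 * C0"
  shows "\<phi> (M*g1)*C1 < \<phi> (M*g0)*C0 \<or> \<phi> (M*g1)*C1 = 0"
proof (cases "M = 0")
  case True
  then show ?thesis using assms(2,6,7)
    by (cases "\<phi> 0 = 0") (auto intro: mult_strict_left_mono simp: less_le)
next
  case False
  then have M: "M > 0" using assms by simp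
  have v: "0 < M*g0" "M*g0 \<le> M*g1" using M assms by (auto intro: mult_left_mono)
  have key: "\<phi> (M*g1) * (M*g0) \<le> \<phi> (M*g0) * (M*g1)"
    by (rule concave_ratio[OF assms(1,2) v])
  have nn: "\<phi> (M*g1) \<ge> 0" "\<phi> (M*g0) \<ge> 0" using assms v by auto
  show ?thesis
  proof (cases "\<phi> (M*g0) = 0")
    case True
    then have "\<phi> (M*g1) * (M*g0) \<le> 0" using key by simp
    then have "\<phi> (M*g1) \<le> 0" using v by (meson not_le mult_pos_pos)
    then show ?thesis using nn by simp
  next
    case False
    then have p: "\<phi> (M*g0) > 0" using nn by simp
    have "\<phi> (M*g1) \<le> \<phi> (M*g0) * g1 / g0"
      using key v M assms(4) by (simp add: field_simps)
    then have "\<phi> (M*g1) * C1 \<le> \<phi> (M*g0) * g1 / g0 * C1"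
      using assms(6) by (metis mult_right_mono less_imp_le)
    also have "\<dots> = \<phi> (M*g0) * (g1 * C1) / g0" by simp
    also have "\<dots> < \<phi> (M*g0) * (g0 * C0) / g0"
      using p assms(4,8) by (intro divide_strict_right_mono mult_strict_left_mono) auto
    also have "\<dots> = \<phi> (M*g0) * C0" using assms(4) by simp
    finally show ?thesis by simp
  qed
qed

lemma sqrt_div_lemma:
  fixes a p q :: real
  assumes "a \<ge> 0" "p \<ge> 0" "q \<ge> 0"
  shows "a / sqrt (a * p * q) = sqrt (a / q) / sqrt p"
proof (cases "a = 0 \<or> p = 0 \<or> q = 0")
  case True then show ?thesis by auto
next
  case False
  then have "a > 0" "p > 0" "q > 0" using assms by auto
  then show ?thesis
    by (simp add: real_sqrt_mult real_sqrt_divide field_simps)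
qed
lemma lbint_powr_inf:
  fixes a e :: real
  assumes "e < -1" "a > 0"
  shows "(LBINT x:{a..}. x powr e) = -(a powr (e+1)) / (e+1)"
proof -
  have h: "((\<lambda>x. x powr e) has_integral -(a powr (e+1)) / (e+1)) {a..}"
    by (rule has_integral_powr_to_inf[OF assms])
  have ai: "(\<lambda>x. x powr e) absolutely_integrable_on {a..}"
    using h by (intro nonnegative_absolutely_integrable_1) (auto simp: integrable_on_def)
  have "(LBINT x:{a..}. x powr e) = (LINT x:{a..}|lebesgue. x powr e)"
    unfolding set_lebesgue_integral_def
    by (rule integral_completion[symmetric]) measurable
  also have "\<dots> = integral {a..} (\<lambda>x. x powr e)"
    using ai by (rule set_lebesgue_integral_eq_integral)
  also have "\<dots> = -(a powr (e+1)) / (e+1)" using h by (rule integral_unique)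
  finally show ?thesis .
qed

lemma lbint_I:
  fixes a g :: real assumes "g > 2" "a > 0"
  shows "(LBINT x:{a..}. x powr (1 - g)) = a powr (2 - g) / (g - 2)"
proof -
  have "(LBINT x:{a..}. x powr (1 - g)) = -(a powr ((1-g)+1)) / ((1-g)+1)"
    using assms by (intro lbint_powr_inf) auto
  also have "\<dots> = a powr (2 - g) / (g - 2)" by (simp add: minus_divide_right)
  finally show ?thesis .
qed

lemma lbint_C:
  fixes a g :: real assumes "g > 2" "a > 0"
  shows "(LBINT x:{a..}. x powr (- g)) = a powr (1 - g) / (g - 1)"
proof -
  have "(LBINT x:{a..}. x powr (- g)) = -(a powr ((-g)+1)) / ((-g)+1)"
    using assms by (intro lbint_powr_inf) auto
  also have "\<dots> = a powr (1 - g) / (g - 1)" by (simp add: minus_divide_right)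
  finally show ?thesis .
qed

lemma lbint_nonneg: "(LBINT y:A. y powr (r::real)) \<ge> 0"
  unfolding set_lebesgue_integral_def
  by (intro integral_nonneg_AE) (auto simp: indicator_def)

lemma x0_pos: "gam > 1 \<Longrightarrow> x0 gam > 0"
  unfolding x0_def by simp

lemma y0_pos: "bet > 1 \<Longrightarrow> y0 bet > 0"
  unfolding y0_def by simp

lemma T0_pos:
  assumes "gam > 2" "bet > 2" shows "T0 gam bet > 0"
proof -
  have "Xbar gam > 0" unfolding Xbar_def using assms x0_pos[of gam]
    by (simp add: lbint_I)
  moreover have "Ybar bet > 0" unfolding Ybar_def using assms y0_pos[of bet]
    by (simp add: lbint_I)
  ultimately show ?thesis by (simp add: T0_def)
qed

lemma rev_form:
  fixes \<phi> :: "real \<Rightarrow> real"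
  assumes "gam > 2" "bet > 2" "xt > 0" "yt \<ge> y0 bet" "0 \<le> B1" "B1 \<le> 1"
    and Ix_def: "Ix = xt powr (2-gam)/(gam-2)"
    and J1_def: "J1 = (LBINT y:{yt..}. y powr (1-bet))"
    and J2_def: "J2 = (LBINT y:{y0 bet..<yt}. y powr (1-bet))"
    and P_def: "P = sqrt (B1 * T0 gam bet / J1)"
    and Q_def: "Q = sqrt ((1-B1) * T0 gam bet / J2)"
  shows "speed1 gam bet xt yt B1 = P / sqrt Ix"
    and "speed2 gam bet xt yt B1 = Q / sqrt Ix"
    and "revenue \<phi> lam gam bet xt yt B1 =
       \<phi> ((Q*J2 + P*J1) * (xt / sqrt Ix)) * (xt powr (1-gam)/(gam-1)) + lam*(P-Q) * sqrt Ix * J1"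
proof -
  have yt: "yt > 0" using y0_pos[of bet] assms by simp
  have T: "T0 gam bet > 0" using T0_pos assms by simp
  have IxE: "(LBINT x:{xt..}. x powr (1 - gam)) = Ix" unfolding Ix_def using assms by (simp add: lbint_I)
  have Ixp: "Ix > 0" unfolding Ix_def using assms by simp
  have J1p: "J1 > 0" unfolding J1_def using assms yt by (simp add: lbint_I)
  have J2n: "J2 \<ge> 0" unfolding J2_def by (rule lbint_nonneg)
  show s1: "speed1 gam bet xt yt B1 = P / sqrt Ix"
    unfolding speed1_def T1_def IxE J1_def[symmetric] P_def
    using sqrt_div_lemma[of "B1 * T0 gam bet" Ix J1] assms T Ixp J1p by simp
  show s2: "speed2 gam bet xt yt B1 = Q / sqrt Ix"
    unfolding speed2_def T2_def IxE J2_def[symmetric] Q_def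
    using sqrt_div_lemma[of "(1-B1) * T0 gam bet" Ix J2] assms T Ixp J2n by simp
  have c: "fee_c \<phi> gam bet xt yt B1 = \<phi> ((Q*J2 + P*J1) * (xt / sqrt Ix))"
    unfolding fee_c_def s1 s2 set_integral_mult_right J1_def[symmetric] J2_def[symmetric]
    using Ixp by (simp add: field_simps)
  have b: "fee_b lam gam bet xt yt B1 = lam*(P-Q) * sqrt Ix"
    unfolding fee_b_def s1 s2 set_integral_mult_right IxE using yt Ixp
    by (simp add: field_simps real_div_sqrt)
  show "revenue \<phi> lam gam bet xt yt B1 =
       \<phi> ((Q*J2 + P*J1) * (xt / sqrt Ix)) * (xt powr (1-gam)/(gam-1)) + lam*(P-Q) * sqrt Ix * J1"
    unfolding revenue_def c b J1_def using assms by (simp add: lbint_C)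
qed
lemma sqrt_powr: "(a::real) > 0 \<Longrightarrow> sqrt (a powr r) = a powr (r/2)"
  by (simp add: powr_half_sqrt[symmetric] powr_powr)

lemma g_form:
  fixes a gam :: real assumes "gam > 2" "a > 0"
  shows "a / sqrt (a powr (2-gam)/(gam-2)) = sqrt (gam-2) * a powr (gam/2)"
proof -
  have "sqrt (a powr (2-gam)/(gam-2)) = a powr (1 - gam/2) / sqrt (gam-2)"
    using assms by (simp add: real_sqrt_divide sqrt_powr field_simps)
  moreover have "a / a powr (1 - gam/2) = a powr (gam/2)"
  proof -
    have "a / a powr (1 - gam/2) = a powr 1 / a powr (1 - gam/2)" using assms by simp
    also have "\<dots> = a powr (1 - (1 - gam/2))" using assms by (simp add: powr_diff)
    finally show ?thesis by simp
  qed
  ultimately show ?thesis using assms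
    by (metis (no_types, lifting) divide_divide_eq_right times_divide_eq_right mult.commute)
qed

lemma mono_facts:
  fixes a b gam :: real assumes "gam > 2" "0 < b" "b < a"
  shows "sqrt (a powr (2-gam)/(gam-2)) < sqrt (b powr (2-gam)/(gam-2))"
    and "a powr (1-gam)/(gam-1) < b powr (1-gam)/(gam-1)"
    and "0 < a powr (1-gam)/(gam-1)"
    and "0 < b / sqrt (b powr (2-gam)/(gam-2))"
    and "b / sqrt (b powr (2-gam)/(gam-2)) \<le> a / sqrt (a powr (2-gam)/(gam-2))"
    and "a / sqrt (a powr (2-gam)/(gam-2)) * (a powr (1-gam)/(gam-1))
       < b / sqrt (b powr (2-gam)/(gam-2)) * (b powr (1-gam)/(gam-1))"
proof -
  have a: "a > 0" using assms by simp
  show "sqrt (a powr (2-gam)/(gam-2)) < sqrt (b powr (2-gam)/(gam-2))"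
    using assms powr_less_mono2_neg[of "2-gam" b a] by (simp add: divide_strict_right_mono)
  show "a powr (1-gam)/(gam-1) < b powr (1-gam)/(gam-1)"
    using assms powr_less_mono2_neg[of "1-gam" b a] by (simp add: divide_strict_right_mono)
  show "0 < a powr (1-gam)/(gam-1)" using assms a by simp
  show "0 < b / sqrt (b powr (2-gam)/(gam-2))" using assms by simp
  show "b / sqrt (b powr (2-gam)/(gam-2)) \<le> a / sqrt (a powr (2-gam)/(gam-2))"
    unfolding g_form[OF assms(1) a] g_form[OF assms(1,2)] using assms
    by (intro mult_left_mono powr_mono2) auto
  have e: "c / sqrt (c powr (2-gam)/(gam-2)) * (c powr (1-gam)/(gam-1))
      = sqrt (gam-2) / (gam-1) * c powr (1 - gam/2)" if "c > 0" for c
    unfolding g_form[OF assms(1) that] using that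
    by (simp add: powr_add[symmetric] field_simps)
  show "a / sqrt (a powr (2-gam)/(gam-2)) * (a powr (1-gam)/(gam-1))
       < b / sqrt (b powr (2-gam)/(gam-2)) * (b powr (1-gam)/(gam-1))"
    unfolding e[OF a] e[OF assms(2)] using assms powr_less_mono2_neg[of "1-gam/2" b a]
    by (intro mult_strict_left_mono) auto
qed
lemma main_step:
  fixes \<phi> :: "real \<Rightarrow> real"
  assumes "gam > 2" "bet > 2" "lam > 0"
    and conc: "concave_on {0..} \<phi>"
    and nn: "\<forall>x\<ge>0. \<phi> x \<ge> 0"
    and F: "feasible gam bet xt yt B1" and xt: "xt > x0 gam"
  shows "feasible gam bet (x0 gam) yt B1"
    and "revenue \<phi> lam gam bet (x0 gam) yt B1 \<ge> 0"
    and "revenue \<phi> lam gam bet xt yt B1 < revenue \<phi> lam gam bet (x0 gam) yt B1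
         \<or> revenue \<phi> lam gam bet xt yt B1 = 0"
proof -
  define X where "X = x0 gam"
  have X: "X > 0" unfolding X_def using x0_pos assms by simp
  have xtp: "xt > 0" using X xt X_def by simp
  define J1 where "J1 = (LBINT y:{yt..}. y powr (1-bet))"
  define J2 where "J2 = (LBINT y:{y0 bet..<yt}. y powr (1-bet))"
  define P where "P = sqrt (B1 * T0 gam bet / J1)"
  define Q where "Q = sqrt ((1-B1) * T0 gam bet / J2)"
  define Ia where "Ia = (\<lambda>a::real. a powr (2-gam)/(gam-2))"
  define C where "C = (\<lambda>a::real. a powr (1-gam)/(gam-1))"
  define g where "g = (\<lambda>a. a / sqrt (Ia a))"
  have fe: "yt \<ge> y0 bet" "0 \<le> B1" "B1 \<le> 1"
    "speed1 gam bet xt yt B1 \<ge> speed2 gam bet xt yt B1"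
    using F unfolding feasible_def by auto
  have yt: "yt > 0" using y0_pos[of bet] assms fe by simp
  have J1p: "J1 > 0" unfolding J1_def using assms yt by (simp add: lbint_I)
  have J2n: "J2 \<ge> 0" unfolding J2_def by (rule lbint_nonneg)
  note RF = rev_form[OF assms(1,2) _ fe(1,2,3) refl J1_def J2_def P_def Q_def]
  note RX = RF[OF X, folded Ia_def]
  note Rt = RF[OF xtp, folded Ia_def]
  have Iap: "\<And>a. a > 0 \<Longrightarrow> Ia a > 0" unfolding Ia_def using assms by simp
  have "P / sqrt (Ia xt) \<ge> Q / sqrt (Ia xt)" using fe(4) Rt(1,2) by (simp add: Ia_def)
  then have PQ: "P \<ge> Q" using Iap[OF xtp] by (simp add: divide_le_cancel)
  have "P / sqrt (Ia X) \<ge> Q / sqrt (Ia X)" using PQ Iap[OF X] by (simp add: divide_right_mono)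
  then show "feasible gam bet (x0 gam) yt B1"
    using fe RX(1,2) X_def unfolding feasible_def by (simp add: Ia_def)
  have T: "T0 gam bet > 0" using T0_pos assms by simp
  have "P \<ge> 0" "Q \<ge> 0" unfolding P_def Q_def using T J1p J2n fe by auto
  then have Mn: "Q*J2 + P*J1 \<ge> 0" using J1p J2n by simp
  have revX: "revenue \<phi> lam gam bet X yt B1 =
       \<phi> ((Q*J2 + P*J1) * g X) * C X + lam*(P-Q) * sqrt (Ia X) * J1"
    using RX(3) by (simp add: g_def C_def Ia_def)
  have revt: "revenue \<phi> lam gam bet xt yt B1 =
       \<phi> ((Q*J2 + P*J1) * g xt) * C xt + lam*(P-Q) * sqrt (Ia xt) * J1"
    using Rt(3) by (simp add: g_def C_def Ia_def)
  note mf0 = mono_facts[OF assms(1) X xt[folded X_def]]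
  have mf: "sqrt (Ia xt) < sqrt (Ia X)" "C xt < C X" "0 < C xt" "0 < g X" "g X \<le> g xt"
     "g xt * C xt < g X * C X"
    using mf0 unfolding g_def C_def Ia_def by auto
  have gX: "g X > 0" using X Iap[OF X] by (simp add: g_def)
  have cX: "\<phi> ((Q*J2 + P*J1) * g X) * C X \<ge> 0"
    using nn Mn gX X assms(1) by (simp add: C_def)
  have bX: "lam*(P-Q) * sqrt (Ia X) * J1 \<ge> 0"
    using PQ assms(3) J1p Iap[OF X] by simp
  show "revenue \<phi> lam gam bet (x0 gam) yt B1 \<ge> 0"
    using revX cX bX X_def by simp
  have cd: "\<phi> ((Q*J2 + P*J1) * g xt) * C xt < \<phi> ((Q*J2 + P*J1) * g X) * C X
      \<or> \<phi> ((Q*J2 + P*J1) * g xt) * C xt = 0"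
    by (rule cterm[OF conc nn Mn mf(4) mf(5) mf(3) mf(2) mf(6)])
  have bd: "lam*(P-Q) * sqrt (Ia xt) * J1 < lam*(P-Q) * sqrt (Ia X) * J1
      \<or> lam*(P-Q) * sqrt (Ia xt) * J1 = 0"
  proof (cases "P = Q")
    case False
    then have "lam*(P-Q) > 0" using PQ assms(3) by simp
    then have "lam*(P-Q) * sqrt (Ia xt) < lam*(P-Q) * sqrt (Ia X)"
      using mf(1) by (rule mult_strict_left_mono[rotated])
    then show ?thesis using J1p by (intro disjI1 mult_strict_right_mono)
  qed simp
  show "revenue \<phi> lam gam bet xt yt B1 < revenue \<phi> lam gam bet (x0 gam) yt B1
         \<or> revenue \<phi> lam gam bet xt yt B1 = 0"
    unfolding revt revX[unfolded X_def] using cd bd cX bX unfolding X_def by linarith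
qed
lemma pos_point:
  fixes \<phi> :: "real \<Rightarrow> real"
  assumes "gam > 2" "bet > 2" "lam > 0"
    and nn: "\<forall>x\<ge>0. \<phi> x \<ge> 0"
  shows "feasible gam bet (x0 gam) (y0 bet) 1"
    and "revenue \<phi> lam gam bet (x0 gam) (y0 bet) 1 > 0"
proof -
  define X where "X = x0 gam"
  have X: "X > 0" unfolding X_def using x0_pos assms by simp
  define J1 where "J1 = (LBINT y:{y0 bet..}. y powr (1-bet))"
  define J2 where "J2 = (LBINT y:{y0 bet..<y0 bet}. y powr (1-bet))"
  define P where "P = sqrt (1 * T0 gam bet / J1)"
  define Q where "Q = sqrt ((1-1) * T0 gam bet / J2)"
  define Ia where "Ia = X powr (2-gam)/(gam-2)"
  have T: "T0 gam bet > 0" using T0_pos assms by simp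
  have J1p: "J1 > 0" unfolding J1_def using assms y0_pos[of bet] by (simp add: lbint_I)
  have J2: "J2 = 0" unfolding J2_def set_lebesgue_integral_def by simp
  have Q: "Q = 0" unfolding Q_def by simp
  have Pp: "P > 0" unfolding P_def using T J1p by simp
  have Iap: "Ia > 0" unfolding Ia_def using X assms by simp
  note R = rev_form[OF assms(1,2) X order_refl _ order_refl Ia_def J1_def J2_def P_def Q_def, simplified]
  show "feasible gam bet (x0 gam) (y0 bet) 1"
    unfolding feasible_def X_def[symmetric] R(1,2) Q using Pp Iap by simp
  have "\<phi> ((Q*J2 + P*J1) * (X / sqrt Ia)) \<ge> 0"
    using nn Pp J1p Q X Iap by simp
  moreover have "X powr (1-gam)/(gam-1) > 0" using X assms by simp
  moreover have "lam*(P-Q) * sqrt Ia * J1 > 0" using assms Pp Q Iap J1p by simp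
  ultimately show "revenue \<phi> lam gam bet (x0 gam) (y0 bet) 1 > 0"
    unfolding X_def[symmetric] R(3) by (metis add_nonneg_pos less_imp_le mult_nonneg_nonneg times_divide_eq_right)
qed

theorem theorem6:
  fixes gam bet lam :: real and \<phi> :: "real \<Rightarrow> real"
  assumes "gam > 2" and "bet > 2" and "lam > 0"
    and "mono_on {0..} \<phi>"
    and "concave_on {0..} \<phi>"
    and "\<forall>x\<ge>0. \<phi> differentiable (at x within {0..})"
    and "\<forall>x\<ge>0. \<phi> x \<ge> 0"
  shows "(\<forall>xt yt B1. feasible gam bet xt yt B1 \<longrightarrow>
            feasible gam bet (x0 gam) yt B1 \<and>
            revenue \<phi> lam gam bet xt yt B1 \<le> revenue \<phi> lam gam bet (x0 gam) yt B1)
       \<and> (\<forall>xt yt B1. feasible gam bet xt yt B1 \<and>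
            (\<forall>xt' yt' B1'. feasible gam bet xt' yt' B1' \<longrightarrow>
                revenue \<phi> lam gam bet xt' yt' B1' \<le> revenue \<phi> lam gam bet xt yt B1)
            \<longrightarrow> xt = x0 gam)"
proof (intro conjI allI impI)
  fix xt yt B1 assume F: "feasible gam bet xt yt B1"
  then have ge: "xt \<ge> x0 gam" unfolding feasible_def by simp
  show "feasible gam bet (x0 gam) yt B1"
  proof (cases "xt = x0 gam")
    case True then show ?thesis using F by simp
  next
    case False then show ?thesis using ge main_step(1)[OF assms(1,2,3,5,7) F] by simp
  qed
  show "revenue \<phi> lam gam bet xt yt B1 \<le> revenue \<phi> lam gam bet (x0 gam) yt B1"
  proof (cases "xt = x0 gam")
    case True then show ?thesis by simp
  next
    case False then have "xt > x0 gam" using ge by simp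
    then show ?thesis using main_step(2,3)[OF assms(1,2,3,5,7) F] by linarith
  qed
next
  fix xt yt B1
  assume H: "feasible gam bet xt yt B1 \<and>
            (\<forall>xt' yt' B1'. feasible gam bet xt' yt' B1' \<longrightarrow>
                revenue \<phi> lam gam bet xt' yt' B1' \<le> revenue \<phi> lam gam bet xt yt B1)"
  then have F: "feasible gam bet xt yt B1" by simp
  then have ge: "xt \<ge> x0 gam" unfolding feasible_def by simp
  show "xt = x0 gam"
  proof (rule ccontr)
    assume "xt \<noteq> x0 gam"
    then have gt: "xt > x0 gam" using ge by simp
    note ms = main_step[OF assms(1,2,3,5,7) F gt]
    have "revenue \<phi> lam gam bet (x0 gam) yt B1 \<le> revenue \<phi> lam gam bet xt yt B1"
      using H ms(1) by blast
    moreover have "revenue \<phi> lam gam bet (x0 gam) (y0 bet) 1 \<le> revenue \<phi> lam gam bet xt yt B1"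
      using H pos_point(1)[OF assms(1,2,3,7)] by blast
    ultimately show False using ms(3) pos_point(2)[OF assms(1,2,3,7)] by linarith
  qed
qed
end
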